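(* Let $n,m_1,m_2$ be positive integers with $m_2 \geq n \geq \lceil \log m_1 \rceil+\lceil \log m_2 \rceil+2$. Let $K_{X,Y,Z}$ be the complete $3$-partite graph with parts $X,Y,Z$ of sizes $|X|=|Y|=32m_1+49m_2$ and $|Z|=m_1+m_2-1$. Then for every coloring of the edges of $K_{X,Y,Z}$ with red and blue there is a red copy of $C_n$ or a blue copy of $K_{m_1,m_2}$.
   Context: $C_n$ is the cycle on $n$ vertices and $K_{a,b}$ the complete bipartite graph with parts of sizes $a$ and $b$. $\log$ denotes the logarithm to base $2$. *)

theory Defs
  imports Complex_Main
begin

text \<open>Edge relation of the complete 3-partite graph with parts X, Y, Z
  (the parts are assumed pairwise disjoint where used).\<close>
definition tripartite_edge :: "'a set \<Rightarrow> 'a set \<Rightarrow> 'a set \<Rightarrow> 'a \<Rightarrow> 'a \<Rightarrow> bool" where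
  "tripartite_edge X Y Z u v \<longleftrightarrow>
     (u \<in> X \<and> v \<in> Y) \<or> (u \<in> Y \<and> v \<in> X) \<or>
     (u \<in> X \<and> v \<in> Z) \<or> (u \<in> Z \<and> v \<in> X) \<or>
     (u \<in> Y \<and> v \<in> Z) \<or> (u \<in> Z \<and> v \<in> Y)"

text \<open>A red/blue colouring of the edges is given by the predicate
  red on unordered pairs {u,v}; an edge is blue iff it is not red.\<close>

definition has_red_cycle ::
  "('a \<Rightarrow> 'a \<Rightarrow> bool) \<Rightarrow> ('a set \<Rightarrow> bool) \<Rightarrow> nat \<Rightarrow> bool" where
  "has_red_cycle E red n \<longleftrightarrow>
     (\<exists>v :: nat \<Rightarrow> 'a. inj_on v {..<n} \<and>
        (\<forall>i<n. E (v i) (v (Suc i mod n)) \<and> red {v i, v (Suc i mod n)}))"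

definition has_blue_Kab ::
  "('a \<Rightarrow> 'a \<Rightarrow> bool) \<Rightarrow> ('a set \<Rightarrow> bool) \<Rightarrow> nat \<Rightarrow> nat \<Rightarrow> bool" where
  "has_blue_Kab E red a b \<longleftrightarrow>
     (\<exists>A B. finite A \<and> finite B \<and> card A = a \<and> card B = b \<and> A \<inter> B = {} \<and>
        (\<forall>x\<in>A. \<forall>y\<in>B. E x y \<and> \<not> red {x, y}))"

end

theory Submission
  imports Defs
begin


lemma cycle_from_list:
  assumes "distinct cs" "length cs = n" "n > 0"
    and "successively (\<lambda>u v. E u v \<and> red {u,v}) cs"
    and "E (last cs) (hd cs)" "red {last cs, hd cs}"
  shows "has_red_cycle E red n"
  unfolding has_red_cycle_def
proof (intro exI[of _ "\<lambda>i. cs ! i"] conjI allI impI)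
  show "inj_on ((!) cs) {..<n}" using assms(1,2) by (simp add: inj_on_def nth_eq_iff_index_eq)
  fix i assume i: "i < n"
  have "E (cs ! i) (cs ! (Suc i mod n)) \<and> red {cs ! i, cs ! (Suc i mod n)}"
  proof (cases "Suc i < n")
    case True
    then show ?thesis using successively_nth[OF assms(4)] assms(2) by simp
  next
    case False
    then have "Suc i = n" using i by simp
    have ne: "cs \<noteq> []" using assms(2,3) by auto
    have ii: "length cs - 1 = i" using \<open>Suc i = n\<close> assms(2) by simp
    have "cs ! i = last cs" using ii ne by (simp add: last_conv_nth)
    moreover have "cs ! (Suc i mod n) = hd cs" using \<open>Suc i = n\<close> ne by (simp add: hd_conv_nth)
    ultimately show ?thesis using assms(5,6) by simp
  qed
  then show "E (cs ! i) (cs ! (Suc i mod n))" "red {cs ! i, cs ! (Suc i mod n)}" by auto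
qed

lemma no_blue_pair:
  assumes "\<not> has_blue_Kab E red m1 m2" "finite U" "finite W" "U \<inter> W = {}"
    and "\<forall>u\<in>U. \<forall>w\<in>W. E u w \<and> E w u \<and> \<not> red {u,w}"
    and "(m1 \<le> card U \<and> m2 \<le> card W) \<or> (m2 \<le> card U \<and> m1 \<le> card W)"
  shows False
  using assms(6)
proof
  assume h: "m1 \<le> card U \<and> m2 \<le> card W"
  obtain A where A: "A \<subseteq> U" "card A = m1" using h obtain_subset_with_card_n by metis
  obtain B where B: "B \<subseteq> W" "card B = m2" using h obtain_subset_with_card_n by metis
  have f: "finite A" "finite B" using A B assms(2,3) finite_subset by auto
  have d: "A \<inter> B = {}" using A B assms(4) by auto
  have e: "\<forall>x\<in>A. \<forall>y\<in>B. E x y \<and> \<not> red {x, y}" using A B assms(5) by auto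
  have "has_blue_Kab E red m1 m2" unfolding has_blue_Kab_def
    using f d e A(2) B(2) by blast
  then show False using assms(1) by blast
next
  assume h: "m2 \<le> card U \<and> m1 \<le> card W"
  obtain A where A: "A \<subseteq> W" "card A = m1" using h obtain_subset_with_card_n by metis
  obtain B where B: "B \<subseteq> U" "card B = m2" using h obtain_subset_with_card_n by metis
  have f: "finite A" "finite B" using A B assms(2,3) finite_subset by auto
  have d: "A \<inter> B = {}" using A B assms(4) by auto
  have e: "\<forall>x\<in>A. \<forall>y\<in>B. E x y \<and> \<not> red {x, y}"
  proof (intro ballI)
    fix x y assume "x \<in> A" "y \<in> B"
    then have "y \<in> U" "x \<in> W" using A B by auto
    then show "E x y \<and> \<not> red {x, y}" using assms(5) by (metis insert_commute)
  qed
  have "has_blue_Kab E red m1 m2" unfolding has_blue_Kab_def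
    using f d e A(2) B(2) by blast
  then show False using assms(1) by blast
qed

definition dfs_inv where
  "dfs_inv adj V S P T \<longleftrightarrow> S \<union> set P \<union> T = V \<and> S \<inter> set P = {} \<and> S \<inter> T = {} \<and> set P \<inter> T = {}
     \<and> distinct P \<and> successively adj P \<and> (\<forall>s\<in>S. \<forall>t\<in>T. \<not> adj s t)"

lemma dfs_step:
  assumes "finite V" "dfs_inv adj V S P T" "card T = card S + k"
  shows "\<exists>S' P' T'. dfs_inv adj V S' P' T' \<and> card S' = card T'"
  using assms(2,3)
proof (induction k arbitrary: S P T)
  case 0
  then show ?case by (metis add_0_right)
next
  case (Suc k)
  have fin: "finite S" "finite T" using Suc.prems(1) assms(1) unfolding dfs_inv_def
    by (metis finite_Un)+
  have "T \<noteq> {}" using Suc.prems(2) by auto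
  then obtain t where t: "t \<in> T" by blast
  show ?case
  proof (cases "P = []")
    case True
    have "dfs_inv adj V S [t] (T - {t})" using Suc.prems(1) True t unfolding dfs_inv_def by auto
    moreover have "card (T - {t}) = card S + k" using Suc.prems(2) t fin by simp
    ultimately show ?thesis using Suc.IH by blast
  next
    case False
    show ?thesis
    proof (cases "\<exists>t\<in>T. adj (last P) t")
      case True
      then obtain t' where t': "t' \<in> T" "adj (last P) t'" by blast
      have "dfs_inv adj V S (P @ [t']) (T - {t'})" using Suc.prems(1) False t'
        unfolding dfs_inv_def by (auto simp: successively_append_iff)
      moreover have "card (T - {t'}) = card S + k" using Suc.prems(2) t' fin by simp
      ultimately show ?thesis using Suc.IH by blast
    next
      case nb: False
      have P: "P = butlast P @ [last P]" using False by simp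
      have P2: "butlast P @ [last P] = P" using False by (rule append_butlast_last_id)
      have sP: "set P = insert (last P) (set (butlast P))"
      proof -
        have "set (butlast P @ [last P]) = insert (last P) (set (butlast P))" by simp
        then show ?thesis using P2 by simp
      qed
      have dd: "distinct (butlast P @ [last P])" using P2 Suc.prems(1) unfolding dfs_inv_def by simp
      have dP: "distinct (butlast P)" "last P \<notin> set (butlast P)" using dd by auto
      have "successively adj (butlast P @ [last P])" using P2 Suc.prems(1) unfolding dfs_inv_def by simp
      then have scP: "successively adj (butlast P)" by (simp add: successively_append_iff)
      have "dfs_inv adj V (insert (last P) S) (butlast P) T"
        using Suc.prems(1) nb sP dP scP unfolding dfs_inv_def by auto
      moreover have "card T = card (insert (last P) S) + k"
      proof -
        have "last P \<notin> S" using Suc.prems(1) False unfolding dfs_inv_def by auto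
        then show ?thesis using Suc.prems(2) fin by simp
      qed
      ultimately show ?thesis using Suc.IH by blast
    qed
  qed
qed

lemma dfs:
  assumes "finite V"
  shows "\<exists>S P T. dfs_inv adj V S P T \<and> card S = card T"
proof -
  have "dfs_inv adj V {} [] V" unfolding dfs_inv_def by auto
  then show ?thesis using dfs_step[OF assms, of adj "{}" "[]" V "card V"] by auto
qed

lemma cleaning:
  fixes adj :: "'a \<Rightarrow> 'a \<Rightarrow> bool" and V :: "'a set" and c k0 :: nat
  assumes "finite V" "k0 > 0"
   and big: "\<forall>D \<subseteq> V. k0 \<le> card D \<and> card D < 2*k0 \<longrightarrow> c * card D < card ({v\<in>V. \<exists>s\<in>D. adj s v} - D)"
  shows "\<exists>D \<subseteq> V. card D < k0 \<and> (\<forall>S \<subseteq> V - D. card S < k0 \<longrightarrow> c * card S \<le> card ({v\<in>V. \<exists>s\<in>S. adj s v} - D))"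
proof -
  define Nb where "Nb = (\<lambda>S. {v\<in>V. \<exists>s\<in>S. adj s v})"
  define F where "F = (\<lambda>D. D \<subseteq> V \<and> card D < k0 \<and> card (Nb D - D) \<le> c * card D)"
  have "F {}" unfolding F_def Nb_def using assms(2) by simp
  moreover have "\<forall>D. F D \<longrightarrow> card D < k0" unfolding F_def by simp
  ultimately obtain D where D: "F D" and Dmax: "\<forall>D'. F D' \<longrightarrow> card D' \<le> card D"
    using ex_has_greatest_nat[of F "{}" card k0] by blast
  have finNb: "finite (Nb A)" for A unfolding Nb_def using assms(1) by simp
  have DV: "D \<subseteq> V" "card D < k0" using D unfolding F_def by auto
  have finD: "finite D" using DV assms(1) finite_subset by blast
  have "\<forall>S \<subseteq> V - D. card S < k0 \<longrightarrow> c * card S \<le> card (Nb S - D)"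
  proof (intro allI impI, rule ccontr)
    fix S assume S: "S \<subseteq> V - D" "card S < k0" and bad: "\<not> c * card S \<le> card (Nb S - D)"
    have finS: "finite S" using S assms(1) finite_subset by blast
    have cardU: "card (D \<union> S) = card D + card S" using S finD finS by (subst card_Un_disjoint) auto
    have sub: "Nb (D \<union> S) - (D \<union> S) \<subseteq> (Nb D - D) \<union> (Nb S - D)" unfolding Nb_def by auto
    have "card (Nb (D \<union> S) - (D \<union> S)) \<le> card ((Nb D - D) \<union> (Nb S - D))"
      by (rule card_mono) (use finNb sub in auto)
    also have "\<dots> \<le> card (Nb D - D) + card (Nb S - D)" by (rule card_Un_le)
    also have "\<dots> < c * card D + c * card S" using D bad unfolding F_def by linarith
    finally have lt: "card (Nb (D \<union> S) - (D \<union> S)) < c * card (D \<union> S)"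
      using cardU by (simp add: distrib_left)
    have DSV: "D \<union> S \<subseteq> V" using DV S by auto
    show False
    proof (cases "card (D \<union> S) < k0")
      case True
      then have "F (D \<union> S)" unfolding F_def using DSV lt by simp
      then have "card S = 0" using Dmax cardU by fastforce
      then show False using bad by simp
    next
      case False
      have "k0 \<le> card (D \<union> S) \<and> card (D \<union> S) < 2*k0" using False cardU DV S by linarith
      then have "c * card (D \<union> S) < card (Nb (D \<union> S) - (D \<union> S))"
        using big DSV unfolding Nb_def by blast
      then show False using lt by simp
    qed
  qed
  then show ?thesis using DV unfolding Nb_def by blast
qed

definition tree_inv :: "('a \<Rightarrow> 'a \<Rightarrow> bool) \<Rightarrow> 'a set \<Rightarrow> ('a \<Rightarrow> bool) \<Rightarrow> 'a \<Rightarrow> 'a \<Rightarrow> nat \<Rightarrow> (nat \<Rightarrow> 'a set) \<Rightarrow> (nat \<Rightarrow> 'a set) \<Rightarrow> bool" where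
  "tree_inv adj V side r1 r2 k L1 L2 \<longleftrightarrow>
    L1 0 = {r1} \<and> L2 0 = {r2} \<and>
    (\<forall>i\<in>{1..k}. L1 i \<subseteq> V \<and> card (L1 i) = 2^i \<and> L2 i \<subseteq> V \<and> card (L2 i) = 2^i) \<and>
    (\<forall>i\<in>{1..k}. \<forall>j\<in>{1..k}. i \<noteq> j \<longrightarrow> L1 i \<inter> L1 j = {} \<and> L2 i \<inter> L2 j = {}) \<and>
    (\<forall>i\<in>{1..k}. \<forall>j\<in>{1..k}. L1 i \<inter> L2 j = {}) \<and>
    (\<forall>i\<in>{1..k}. (\<forall>v\<in>L1 i. \<exists>u\<in>L1 (i-1). adj u v) \<and> (\<forall>v\<in>L2 i. \<exists>u\<in>L2 (i-1). adj u v)) \<and>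
    (\<forall>i\<le>k. (\<forall>v\<in>L1 i. side v = (side r1 = even i)) \<and> (\<forall>v\<in>L2 i. side v = (side r2 = even i))) \<and>
    card (\<Union>i\<in>{1..k}. L1 i \<union> L2 i) + 4 \<le> 2^(k+2)"

lemma card_le_diff: "finite A \<Longrightarrow> finite B \<Longrightarrow> card A \<le> card (A - B) + card B"
proof -
  assume f: "finite A" "finite B"
  have "card A = card (A - B) + card (A \<inter> B)"
    using f by (metis card_Un_disjoint Diff_Diff_Int Diff_disjoint Int_Diff_disjoint Un_Diff_Int finite_Diff finite_Int)
  moreover have "card (A \<inter> B) \<le> card B" using f by (simp add: card_mono)
  ultimately show ?thesis by simp
qed

lemma tree_grow:
  fixes adj :: "'a \<Rightarrow> 'a \<Rightarrow> bool" and V :: "'a set" and side :: "'a \<Rightarrow> bool"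
  assumes fin: "finite V" and r: "r1 \<notin> V" "r2 \<notin> V"
    and exp: "\<forall>S \<subseteq> V. card S < 2*m \<longrightarrow> 8 * card S \<le> card {v\<in>V. \<exists>s\<in>S. adj s v}"
    and g1: "4 \<le> card {v\<in>V. adj r1 v}" and g2: "4 \<le> card {v\<in>V. adj r2 v}"
    and alt: "\<And>u v. adj u v \<Longrightarrow> side u \<noteq> side v"
  shows "2^k \<le> 2*m \<Longrightarrow> \<exists>L1 L2. tree_inv adj V side r1 r2 k L1 L2"
proof (induction k)
  case 0
  show ?case unfolding tree_inv_def by (intro exI[of _ "\<lambda>_. {r1}"] exI[of _ "\<lambda>_. {r2}"]) simp
next
  case (Suc k)
  then have "2^k \<le> 2*m" by simp
  then obtain L1 L2 where I: "tree_inv adj V side r1 r2 k L1 L2" using Suc.IH by blast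
  have "2^k \<le> m" using Suc.prems by simp
  moreover have "(0::nat) < 2^k" by simp
  ultimately have km: "2^k < 2*m" by linarith
  define Nb where "Nb = (\<lambda>S. {v\<in>V. \<exists>s\<in>S. adj s v})"
  define Used where "Used = (\<Union>i\<in>{1..k}. L1 i \<union> L2 i)"
  have finNb: "finite (Nb S)" for S unfolding Nb_def using fin by simp
  have I0a: "L1 0 = {r1}" using I unfolding tree_inv_def by (elim conjE) assumption
  have I0b: "L2 0 = {r2}" using I unfolding tree_inv_def by (elim conjE) assumption
  have Isz: "\<forall>i\<in>{1..k}. L1 i \<subseteq> V \<and> card (L1 i) = 2^i \<and> L2 i \<subseteq> V \<and> card (L2 i) = 2^i" using I unfolding tree_inv_def by (elim conjE) assumption
  have Idj: "\<forall>i\<in>{1..k}. \<forall>j\<in>{1..k}. i \<noteq> j \<longrightarrow> L1 i \<inter> L1 j = {} \<and> L2 i \<inter> L2 j = {}" using I unfolding tree_inv_def by (elim conjE) assumption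
  have Idj2: "\<forall>i\<in>{1..k}. \<forall>j\<in>{1..k}. L1 i \<inter> L2 j = {}" using I unfolding tree_inv_def by (elim conjE) assumption
  have Ipar: "\<forall>i\<in>{1..k}. (\<forall>v\<in>L1 i. \<exists>u\<in>L1 (i-1). adj u v) \<and> (\<forall>v\<in>L2 i. \<exists>u\<in>L2 (i-1). adj u v)" using I unfolding tree_inv_def by (elim conjE) assumption
  have Isd: "\<forall>i\<le>k. (\<forall>v\<in>L1 i. side v = (side r1 = even i)) \<and> (\<forall>v\<in>L2 i. side v = (side r2 = even i))" using I unfolding tree_inv_def by (elim conjE) assumption
  have Icd: "card (\<Union>i\<in>{1..k}. L1 i \<union> L2 i) + 4 \<le> 2^(k+2)" using I unfolding tree_inv_def by (elim conjE) assumption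
  note I0 = I0a I0b
  have "Used \<subseteq> V" using Isz unfolding Used_def by auto
  then have finU: "finite Used" using fin finite_subset by blast
  have cU: "card Used + 4 \<le> 2^(k+2)" using Icd unfolding Used_def .
  have expL: "8 * 2^k \<le> card (Nb (L k)) + 4" if "L 0 = {r}" "4 \<le> card {v\<in>V. adj r v}"
     "k \<ge> 1 \<Longrightarrow> L k \<subseteq> V \<and> card (L k) = 2^k" for L r
  proof (cases "k = 0")
    case True
    then show ?thesis using that unfolding Nb_def by simp
  next
    case False
    then have LV: "L k \<subseteq> V" "card (L k) = 2^k" using that by auto
    then have "card (L k) < 2*m" using km by simp
    then have "8 * card (L k) \<le> card (Nb (L k))" using exp LV(1) unfolding Nb_def by blast
    then show ?thesis using LV(2) by simp
  qed
  have I1: "L1 0 = {r1}" "L2 0 = {r2}" "\<forall>i\<in>{1..k}. L1 i \<subseteq> V \<and> card (L1 i) = 2^i \<and> L2 i \<subseteq> V \<and> card (L2 i) = 2^i"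
    using I0 Isz by auto
  have e1: "8 * 2^k \<le> card (Nb (L1 k)) + 4" by (rule expL[of L1 r1]) (use I1 g1 in auto)
  have e2: "8 * 2^k \<le> card (Nb (L2 k)) + 4" by (rule expL[of L2 r2]) (use I1 g2 in auto)
  have "card (Nb (L1 k)) \<le> card (Nb (L1 k) - Used) + card Used"
    by (rule card_le_diff) (use finNb finU in auto)
  then have "2^(Suc k) \<le> card (Nb (L1 k) - Used)" using e1 cU by simp
  then obtain N1 where N1: "N1 \<subseteq> Nb (L1 k) - Used" "card N1 = 2^(Suc k)"
    using obtain_subset_with_card_n by metis
  have "card (Nb (L2 k)) \<le> card (Nb (L2 k) - (Used \<union> N1)) + card (Used \<union> N1)"
    by (rule card_le_diff) (use finNb finU N1 finite_subset[of N1 "Nb (L1 k)"] in auto)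
  moreover have "card (Used \<union> N1) \<le> card Used + card N1" by (rule card_Un_le)
  ultimately have "2^(Suc k) \<le> card (Nb (L2 k) - (Used \<union> N1))" using e2 cU N1(2) by simp
  then obtain N2 where N2: "N2 \<subseteq> Nb (L2 k) - (Used \<union> N1)" "card N2 = 2^(Suc k)"
    using obtain_subset_with_card_n by metis
  define L1' where "L1' = L1(Suc k := N1)"
  define L2' where "L2' = L2(Suc k := N2)"
  have N1V: "N1 \<subseteq> V" "N1 \<inter> Used = {}" using N1 unfolding Nb_def by auto
  have N2V: "N2 \<subseteq> V" "N2 \<inter> Used = {}" "N2 \<inter> N1 = {}" using N2 unfolding Nb_def by auto
  have LU: "L1 i \<subseteq> Used" "L2 i \<subseteq> Used" if "i \<in> {1..k}" for i using that unfolding Used_def by auto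
  have par1: "\<forall>v\<in>N1. \<exists>u\<in>L1 k. adj u v" and par2: "\<forall>v\<in>N2. \<exists>u\<in>L2 k. adj u v"
    using N1 N2 unfolding Nb_def by auto
  have sd1: "\<forall>v\<in>L1 k. side v = (side r1 = even k)" and sd2: "\<forall>v\<in>L2 k. side v = (side r2 = even k)"
    using Isd by auto
  have "tree_inv adj V side r1 r2 (Suc k) L1' L2'"
    unfolding tree_inv_def
  proof (intro conjI)
    show "L1' 0 = {r1}" "L2' 0 = {r2}" using I0 unfolding L1'_def L2'_def by auto
    show "\<forall>i\<in>{1..Suc k}. L1' i \<subseteq> V \<and> card (L1' i) = 2 ^ i \<and> L2' i \<subseteq> V \<and> card (L2' i) = 2 ^ i"
      using Isz N1 N2 N1V N2V unfolding L1'_def L2'_def by (auto simp: le_Suc_eq)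
    show "\<forall>i\<in>{1..Suc k}. \<forall>j\<in>{1..Suc k}. i \<noteq> j \<longrightarrow> L1' i \<inter> L1' j = {} \<and> L2' i \<inter> L2' j = {}"
    proof (intro ballI impI)
      fix i j assume ij: "i \<in> {1..Suc k}" "j \<in> {1..Suc k}" "i \<noteq> j"
      show "L1' i \<inter> L1' j = {} \<and> L2' i \<inter> L2' j = {}"
      proof (cases "i = Suc k")
        case True
        then have "j \<in> {1..k}" using ij by auto
        then show ?thesis using True LU[of j] N1V N2V ij unfolding L1'_def L2'_def by auto
      next
        case False
        then have i: "i \<in> {1..k}" using ij by auto
        show ?thesis
        proof (cases "j = Suc k")
          case True
          then show ?thesis using i LU[of i] N1V N2V ij unfolding L1'_def L2'_def by auto
        next
          case False
          then have "j \<in> {1..k}" using ij by auto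
          then show ?thesis using i Idj ij unfolding L1'_def L2'_def by auto
        qed
      qed
    qed
    show "\<forall>i\<in>{1..Suc k}. \<forall>j\<in>{1..Suc k}. L1' i \<inter> L2' j = {}"
    proof (intro ballI)
      fix i j assume ij: "i \<in> {1..Suc k}" "j \<in> {1..Suc k}"
      show "L1' i \<inter> L2' j = {}"
      proof (cases "i = Suc k")
        case True
        show ?thesis
        proof (cases "j = Suc k")
          case True
          then show ?thesis using \<open>i = Suc k\<close> N2V unfolding L1'_def L2'_def by auto
        next
          case False
          then have "j \<in> {1..k}" using ij by auto
          then show ?thesis using True LU[of j] N1V unfolding L1'_def L2'_def by auto
        qed
      next
        case False
        then have i: "i \<in> {1..k}" using ij by auto
        show ?thesis
        proof (cases "j = Suc k")
          case True
          then show ?thesis using i LU[of i] N2V unfolding L1'_def L2'_def by auto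
        next
          case False
          then have "j \<in> {1..k}" using ij by auto
          then show ?thesis using i Idj2 unfolding L1'_def L2'_def by auto
        qed
      qed
    qed
    show "\<forall>i\<in>{1..Suc k}. (\<forall>v\<in>L1' i. \<exists>u\<in>L1' (i - 1). adj u v) \<and> (\<forall>v\<in>L2' i. \<exists>u\<in>L2' (i - 1). adj u v)"
    proof (intro ballI)
      fix i assume i: "i \<in> {1..Suc k}"
      show "(\<forall>v\<in>L1' i. \<exists>u\<in>L1' (i - 1). adj u v) \<and> (\<forall>v\<in>L2' i. \<exists>u\<in>L2' (i - 1). adj u v)"
      proof (cases "i = Suc k")
        case True
        then show ?thesis using par1 par2 unfolding L1'_def L2'_def by auto
      next
        case False
        then have "i \<in> {1..k}" using i by auto
        then show ?thesis using Ipar unfolding L1'_def L2'_def by auto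
      qed
    qed
    show "\<forall>i\<le>Suc k. (\<forall>v\<in>L1' i. side v = (side r1 = even i)) \<and> (\<forall>v\<in>L2' i. side v = (side r2 = even i))"
    proof (intro allI impI)
      fix i assume i: "i \<le> Suc k"
      show "(\<forall>v\<in>L1' i. side v = (side r1 = even i)) \<and> (\<forall>v\<in>L2' i. side v = (side r2 = even i))"
      proof (cases "i = Suc k")
        case True
        have a1: "side v = (side r1 = even i)" if vN: "v \<in> N1" for v
        proof -
          obtain u where u: "u \<in> L1 k" "adj u v" using par1 vN by blast
          have "side u \<noteq> side v" using u(2) by (rule alt)
          moreover have "side u = (side r1 = even k)" using sd1 u(1) by blast
          ultimately show ?thesis using True by auto
        qed
        have a2: "side v = (side r2 = even i)" if vN: "v \<in> N2" for v
        proof -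
          obtain u where u: "u \<in> L2 k" "adj u v" using par2 vN by blast
          have "side u \<noteq> side v" using u(2) by (rule alt)
          moreover have "side u = (side r2 = even k)" using sd2 u(1) by blast
          ultimately show ?thesis using True by auto
        qed
        show ?thesis using a1 a2 True unfolding L1'_def L2'_def by auto
      next
        case False
        then have "i \<le> k" using i by auto
        then show ?thesis using Isd unfolding L1'_def L2'_def by auto
      qed
    qed
    have ins: "{1..Suc k} = insert (Suc k) {1..k}" by auto
    have eqU: "(\<Union>i\<in>{1..k}. L1' i \<union> L2' i) = Used" unfolding Used_def L1'_def L2'_def
      by (rule SUP_cong) auto
    have eqA: "(\<Union>i\<in>{1..Suc k}. L1' i \<union> L2' i) = Used \<union> N1 \<union> N2"
      unfolding ins UN_insert eqU unfolding L1'_def L2'_def by auto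
    have c1: "card (Used \<union> N1 \<union> N2) \<le> card (Used \<union> N1) + card N2" by (rule card_Un_le)
    moreover have c2: "card (Used \<union> N1) \<le> card Used + card N1" by (rule card_Un_le)
    moreover have "(2::nat)^(Suc k + 2) = 2^(k+2) + 2^(Suc k) + 2^(Suc k)" by simp
    ultimately show "card (\<Union>i\<in>{1..Suc k}. L1' i \<union> L2' i) + 4 \<le> 2 ^ (Suc k + 2)"
      unfolding eqA using cU N1(2) N2(2) by linarith
  qed
  then show ?case by blast
qed

lemma ceil_log_facts:
  fixes m :: nat assumes "m > 0"
  shows "m \<le> 2 ^ nat \<lceil>log 2 m\<rceil>" and "nat \<lceil>log 2 m\<rceil> \<ge> 1 \<Longrightarrow> 2 ^ (nat \<lceil>log 2 m\<rceil> - 1) < m"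
proof -
  have l0: "log 2 m \<ge> 0" using assms by simp
  define k where "k = nat \<lceil>log 2 m\<rceil>"
  have kk: "real k = of_int \<lceil>log 2 m\<rceil>" unfolding k_def using l0 by simp
  have "log 2 m \<le> real k" using kk by (simp add: le_of_int_ceiling)
  then have "real m \<le> 2 powr real k" using assms by (simp add: log_le_iff)
  then have "real m \<le> 2 ^ k" by (simp add: powr_realpow)
  then have "real m \<le> real (2 ^ k)" by simp
  then show "m \<le> 2 ^ nat \<lceil>log 2 m\<rceil>" unfolding k_def[symmetric] by (simp only: of_nat_le_iff)
  assume k1: "nat \<lceil>log 2 m\<rceil> \<ge> 1"
  have "real k - 1 < log 2 m" using kk ceiling_correct[of "log 2 m"] by linarith
  then have pw: "2 powr (real k - 1) < real m" using assms by (simp add: less_log_iff)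
  have eq: "real k - 1 = real (k - 1)"
  proof -
    have "k \<ge> 1" using k1 unfolding k_def .
    then show ?thesis by (simp add: of_nat_diff)
  qed
  have "2 powr (real (k - 1)) < real m" using pw unfolding eq .
  then have "2 ^ (k - 1) < real m" by (subst (asm) powr_realpow) auto
  then have "real (2 ^ (k - 1)) < real m" by simp
  then show "2 ^ (nat \<lceil>log 2 m\<rceil> - 1) < m" unfolding k_def[symmetric] by (simp only: of_nat_less_iff)
qed

lemma exists_a:
  fixes m1 m2 n :: nat
  assumes "m1 > 0" "m2 > 0" "m2 \<ge> n"
    and h: "int n \<ge> \<lceil>log 2 (real m1)\<rceil> + \<lceil>log 2 (real m2)\<rceil> + 2"
  shows "\<exists>a\<ge>1. min m1 m2 \<le> 2^a \<and> 2^a \<le> 2 * min m1 m2 \<and> 2*a + 2 \<le> n"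
proof -
  define m where "m = min m1 m2"
  have m0: "m > 0" using assms unfolding m_def by simp
  have c1: "\<lceil>log 2 (real m)\<rceil> \<le> \<lceil>log 2 (real m1)\<rceil>" "\<lceil>log 2 (real m)\<rceil> \<le> \<lceil>log 2 (real m2)\<rceil>"
    using m0 unfolding m_def by (auto intro!: ceiling_mono)
  have g0: "\<lceil>log 2 (real m)\<rceil> \<ge> 0" "\<lceil>log 2 (real m1)\<rceil> \<ge> 0" "\<lceil>log 2 (real m2)\<rceil> \<ge> 0"
  proof -
    have "log 2 (real m) \<ge> 0" "log 2 (real m1) \<ge> 0" "log 2 (real m2) \<ge> 0" using m0 assms by simp_all
    then show "\<lceil>log 2 (real m)\<rceil> \<ge> 0" "\<lceil>log 2 (real m1)\<rceil> \<ge> 0" "\<lceil>log 2 (real m2)\<rceil> \<ge> 0" by simp_all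
  qed
  define k where "k = nat \<lceil>log 2 m\<rceil>"
  have ik: "int k = \<lceil>log 2 (real m)\<rceil>" unfolding k_def using g0 by simp
  have "2 * int k + 2 \<le> int n" using c1 h ik by linarith
  then have nk: "2 * k + 2 \<le> n" by linarith
  show ?thesis
  proof (cases "k \<ge> 1")
    case True
    have A: "m \<le> 2^k" using ceil_log_facts(1)[OF m0] unfolding k_def .
    have B: "2^(k-1) < m" using ceil_log_facts(2)[OF m0] True unfolding k_def by simp
    obtain j where j: "k = Suc j" using True by (cases k) auto
    have C: "2^k \<le> 2*m" using B unfolding j by simp
    show ?thesis unfolding m_def[symmetric] using A C True nk by blast
  next
    case False
    then have "k = 0" by simp
    then have "m \<le> 1" using ceil_log_facts(1)[OF m0] unfolding k_def by simp
    then have m1: "m = 1" using m0 by simp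
    have n2: "n \<ge> 2" using nk by simp
    then have "real m2 \<ge> 2" using assms by simp
    then have "1 \<le> log 2 (real m2)" by (simp add: le_log_iff)
    then have "\<lceil>log 2 (real m2)\<rceil> \<ge> 1" by (simp add: le_ceiling_iff)
    then have n3: "n \<ge> 3" using h g0 by linarith
    then have "real m2 \<ge> 3" using assms by simp
    then have "1 < log 2 (real m2)" by (simp add: less_log_iff)
    then have "\<lceil>log 2 (real m2)\<rceil> \<ge> 2" by (simp add: le_ceiling_iff)
    then have "n \<ge> 4" using h g0 by linarith
    then show ?thesis unfolding m_def[symmetric] using m1 by (intro exI[of _ 1]) auto
  qed
qed

lemma tree_path:
  assumes "\<forall>i\<in>{1..k}. \<forall>v\<in>L i. \<exists>u\<in>L (i-1). adj u v" "L 0 = {r}" "v \<in> L k"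
  shows "\<exists>p. p 0 = r \<and> p k = v \<and> (\<forall>i\<le>k. p i \<in> L i) \<and> (\<forall>i<k. adj (p i) (p (Suc i)))"
  using assms
proof (induction k arbitrary: v)
  case 0
  then show ?case by (intro exI[of _ "\<lambda>_. r"]) auto
next
  case (Suc k)
  obtain u where u: "u \<in> L k" "adj u v" using Suc.prems(1,3) by force
  have "\<forall>i\<in>{1..k}. \<forall>v\<in>L i. \<exists>u\<in>L (i-1). adj u v" using Suc.prems(1) by auto
  then obtain p where p: "p 0 = r" "p k = u" "\<forall>i\<le>k. p i \<in> L i" "\<forall>i<k. adj (p i) (p (Suc i))"
    using Suc.IH[OF _ Suc.prems(2) u(1)] by blast
  define p' where "p' = p(Suc k := v)"
  show ?case
  proof (intro exI[of _ p'] conjI allI impI)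
    show "p' 0 = r" "p' (Suc k) = v" using p unfolding p'_def by auto
    fix i
    show "i \<le> Suc k \<Longrightarrow> p' i \<in> L i" using p Suc.prems(3) unfolding p'_def by (auto simp: le_Suc_eq)
    show "i < Suc k \<Longrightarrow> adj (p' i) (p' (Suc i))" using p u unfolding p'_def
      by (cases "i = k") (auto simp: less_Suc_eq)
  qed
qed

lemma list_parity:
  assumes "successively R xs" "\<And>u v. R u v \<Longrightarrow> f u \<noteq> f v" "i + q < length xs"
  shows "f (xs ! (i + q)) = (f (xs ! i) = even q)"
  using assms(3)
proof (induction q)
  case 0
  then show ?case by simp
next
  case (Suc q)
  have "R (xs ! (i + q)) (xs ! Suc (i + q))" using successively_nth[OF assms(1)] Suc.prems by simp
  then have "f (xs ! Suc (i+q)) \<noteq> f (xs ! (i+q))" using assms(2) by metis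
  then show ?case using Suc by auto
qed

lemma card_sub_Un_le: "finite B \<Longrightarrow> finite C \<Longrightarrow> A \<subseteq> B \<union> C \<Longrightarrow> card A \<le> card B + card C"
proof -
  assume f: "finite B" "finite C" "A \<subseteq> B \<union> C"
  then have "card A \<le> card (B \<union> C)" by (intro card_mono) auto
  also have "\<dots> \<le> card B + card C" by (rule card_Un_le)
  finally show ?thesis .
qed

lemma succ_map_upt:
  assumes "\<And>j. lo \<le> j \<Longrightarrow> Suc j < hi \<Longrightarrow> R (f j) (f (Suc j))"
  shows "successively R (map f [lo..<hi])"
  unfolding successively_conv_nth
proof (intro allI impI)
  fix k assume k: "Suc k < length (map f [lo..<hi])"
  then have "Suc k < hi - lo" by simp
  then have "(map f [lo..<hi]) ! k = f (lo + k)" "(map f [lo..<hi]) ! Suc k = f (Suc (lo + k))" by auto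
  moreover have "R (f (lo + k)) (f (Suc (lo + k)))" using assms \<open>Suc k < hi - lo\<close> by auto
  ultimately show "R (map f [lo..<hi] ! k) (map f [lo..<hi] ! Suc k)" by simp
qed

lemma succ_app:
  assumes "successively R xs" "successively R ys" "xs \<noteq> [] \<Longrightarrow> ys \<noteq> [] \<Longrightarrow> R (last xs) (hd ys)"
  shows "successively R (xs @ ys)"
  using assms by (auto simp: successively_append_iff)




theorem lemma2p8:
  fixes n m1 m2 :: nat
    and X Y Z :: "'a set"
    and red :: "'a set \<Rightarrow> bool"
  assumes "n > 0" "m1 > 0" "m2 > 0"
    and "m2 \<ge> n"
    and "int n \<ge> \<lceil>log 2 (real m1)\<rceil> + \<lceil>log 2 (real m2)\<rceil> + 2"
    and "finite X" "finite Y" "finite Z"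
    and "X \<inter> Y = {}" "X \<inter> Z = {}" "Y \<inter> Z = {}"
    and "card X = 32 * m1 + 49 * m2" "card Y = 32 * m1 + 49 * m2"
    and "card Z = m1 + m2 - 1"
  shows "has_red_cycle (tripartite_edge X Y Z) red n \<or>
         has_blue_Kab (tripartite_edge X Y Z) red m1 m2"
proof (rule disjCI)
  assume nb: "\<not> has_blue_Kab (tripartite_edge X Y Z) red m1 m2"
  define E where "E = tripartite_edge X Y Z"
  define m where "m = min m1 m2"
  define M where "M = max m1 m2"
  have mM: "1 \<le> m" "m \<le> M" "n \<le> M" "m + M = m1 + m2" using assms(2-4) unfolding m_def M_def by auto
  define N where "N = 32 * m1 + 49 * m2"
  have NM: "32 * M + 49 * m \<le> N" unfolding N_def m_def M_def by auto
  have Esym: "E u v \<Longrightarrow> E v u" for u v unfolding E_def tripartite_edge_def by auto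
  have Enot: "\<not> E u u" for u unfolding E_def tripartite_edge_def using assms(9-11) by auto
  have redsym: "red {u,v} = red {v,u}" for u v by (simp add: insert_commute)
  have P: "\<exists>u\<in>U. \<exists>w\<in>W. red {u,w}"
    if "finite U" "finite W" "\<forall>u\<in>U. \<forall>w\<in>W. E u w" "(m \<le> card U \<and> M \<le> card W) \<or> (M \<le> card U \<and> m \<le> card W)" for U W
  proof (rule ccontr)
    assume "\<not> (\<exists>u\<in>U. \<exists>w\<in>W. red {u,w})"
    then have h: "\<forall>u\<in>U. \<forall>w\<in>W. E u w \<and> E w u \<and> \<not> red {u,w}" using that(3) Esym by blast
    have d: "U \<inter> W = {}" using that(3) Enot by blast
    have "(m1 \<le> card U \<and> m2 \<le> card W) \<or> (m2 \<le> card U \<and> m1 \<le> card W)"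
      using that(4) unfolding m_def M_def by (cases "m1 \<le> m2") auto
    then show False using no_blue_pair[OF nb[folded E_def] that(1,2) d h] by blast
  qed
  have Pnon: "card {w\<in>W. \<forall>u\<in>U. \<not> red {u,w}} < M"
    if "finite U" "finite W" "\<forall>u\<in>U. \<forall>w\<in>W. E u w" "m \<le> card U" for U W
  proof (rule ccontr)
    assume "\<not> ?thesis"
    then have "\<exists>u\<in>U. \<exists>w\<in>{w\<in>W. \<forall>u\<in>U. \<not> red {u,w}}. red {u,w}"
      using that by (intro P) auto
    then show False by blast
  qed
  have Pnon2: "card {w\<in>W. \<forall>u\<in>U. \<not> red {u,w}} < m"
    if "finite U" "finite W" "\<forall>u\<in>U. \<forall>w\<in>W. E u w" "M \<le> card U" for U W
  proof (rule ccontr)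
    assume "\<not> ?thesis"
    then have "\<exists>u\<in>U. \<exists>w\<in>{w\<in>W. \<forall>u\<in>U. \<not> red {u,w}}. red {u,w}"
      using that by (intro P) auto
    then show False by blast
  qed
  obtain a where a: "a \<ge> 1" "m \<le> 2^a" "2^a \<le> 2*m" "2*a + 2 \<le> n"
    using exists_a[OF assms(2,3,4,5)] unfolding m_def by blast
  define s1 where "s1 = 3*M + 4*m"
  have "s1 \<le> card X" using NM assms(12) unfolding s1_def N_def by simp
  then obtain X1 where X1: "X1 \<subseteq> X" "card X1 = s1" using obtain_subset_with_card_n by metis
  have "s1 \<le> card Y" using NM assms(13) unfolding s1_def N_def by simp
  then obtain Y1 where Y1: "Y1 \<subseteq> Y" "card Y1 = s1" using obtain_subset_with_card_n by metis
  define X2 where "X2 = X - X1"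
  define Y2 where "Y2 = Y - Y1"
  define s2 where "s2 = N - s1"
  have cX2: "card X2 = s2" unfolding X2_def s2_def N_def using X1 assms(6,12) by (simp add: card_Diff_subset finite_subset)
  have cY2: "card Y2 = s2" unfolding Y2_def s2_def N_def using Y1 assms(7,13) by (simp add: card_Diff_subset finite_subset)
  have s2b: "29 * M + 45 * m \<le> s2" using NM unfolding s2_def s1_def by simp
  have finX1: "finite X1" "finite Y1" "finite X2" "finite Y2"
    using X1 Y1 assms(6,7) finite_subset unfolding X2_def Y2_def by auto
  define adj0 where "adj0 = (\<lambda>u v. ((u \<in> X \<and> v \<in> Y) \<or> (u \<in> Y \<and> v \<in> X)) \<and> red {u,v})"
  have adjE: "adj0 u v \<Longrightarrow> E u v \<and> red {u,v}" for u v unfolding adj0_def E_def tripartite_edge_def by auto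
  have adjsym: "adj0 u v \<Longrightarrow> adj0 v u" for u v unfolding adj0_def by (auto simp: insert_commute)
  define V1 where "V1 = X1 \<union> Y1"
  define V2 where "V2 = X2 \<union> Y2"
  have XY1: "X1 \<inter> Y1 = {}" "X2 \<inter> Y2 = {}" "X1 \<inter> Y2 = {}" "Y1 \<inter> X2 = {}" "X1 \<inter> X2 = {}" "Y1 \<inter> Y2 = {}"
    using X1 Y1 assms(9) unfolding X2_def Y2_def by auto
  have sub: "X1 \<subseteq> X" "Y1 \<subseteq> Y" "X2 \<subseteq> X" "Y2 \<subseteq> Y" using X1 Y1 unfolding X2_def Y2_def by auto
  have V12: "V1 \<inter> V2 = {}" using XY1 unfolding V1_def V2_def by auto
  have finV: "finite V1" "finite V2" using finX1 unfolding V1_def V2_def by auto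
  have adjV: "adj0 u v \<Longrightarrow> u \<in> V2 \<Longrightarrow> v \<in> V2 \<Longrightarrow> (u \<in> X2 \<and> v \<in> Y2) \<or> (u \<in> Y2 \<and> v \<in> X2)" for u v
    unfolding adj0_def V2_def using sub assms(9) by auto
  have expand: "card B < card {w\<in>B. \<exists>u\<in>A. adj0 u w} + M"
    if "(A \<subseteq> X \<and> B \<subseteq> Y) \<or> (A \<subseteq> Y \<and> B \<subseteq> X)" "finite A" "finite B" "m \<le> card A" for A B
  proof -
    have EAB: "\<forall>u\<in>A. \<forall>w\<in>B. E u w" using that(1) unfolding E_def tripartite_edge_def by auto
    have "card {w\<in>B. \<forall>u\<in>A. \<not> red {u,w}} < M" using Pnon[OF that(2,3) EAB that(4)] .
    moreover have "B \<subseteq> {w\<in>B. \<exists>u\<in>A. adj0 u w} \<union> {w\<in>B. \<forall>u\<in>A. \<not> red {u,w}}"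
      using that(1) unfolding adj0_def by auto
    then have "card B \<le> card {w\<in>B. \<exists>u\<in>A. adj0 u w} + card {w\<in>B. \<forall>u\<in>A. \<not> red {u,w}}"
      by (rule card_sub_Un_le[rotated 2]) (use that(3) in auto)
    ultimately show ?thesis by linarith
  qed
  have big: "\<forall>D \<subseteq> V2. 2*m \<le> card D \<and> card D < 2*(2*m) \<longrightarrow> 8 * card D < card ({v\<in>V2. \<exists>s\<in>D. adj0 s v} - D)"
  proof (intro allI impI)
    fix D assume D: "D \<subseteq> V2" "2*m \<le> card D \<and> card D < 2*(2*m)"
    have finD: "finite D" using D(1) finV finite_subset by blast
    have "D \<subseteq> (D \<inter> X2) \<union> (D \<inter> Y2)" using D(1) unfolding V2_def by auto
    then have "card D \<le> card (D \<inter> X2) + card (D \<inter> Y2)" by (rule card_sub_Un_le[rotated 2]) (use finD in auto)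
    then have "m \<le> card (D \<inter> X2) \<or> m \<le> card (D \<inter> Y2)" using D(2) by linarith
    then obtain A B where AB: "(A = D \<inter> X2 \<and> B = Y2) \<or> (A = D \<inter> Y2 \<and> B = X2)" "m \<le> card A" by blast
    have AB': "(A \<subseteq> X \<and> B \<subseteq> Y) \<or> (A \<subseteq> Y \<and> B \<subseteq> X)" "finite A" "finite B" "A \<subseteq> D" "card B = s2"
      using AB(1) sub finD finX1 cX2 cY2 by auto
    have e: "card B < card {w\<in>B. \<exists>u\<in>A. adj0 u w} + M" using expand[OF AB'(1-3) AB(2)] .
    have "{w\<in>B. \<exists>u\<in>A. adj0 u w} \<subseteq> ({v\<in>V2. \<exists>s\<in>D. adj0 s v} - D) \<union> D"
      using AB(1) AB'(4) unfolding V2_def by auto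
    then have "card {w\<in>B. \<exists>u\<in>A. adj0 u w} \<le> card ({v\<in>V2. \<exists>s\<in>D. adj0 s v} - D) + card D"
      by (rule card_sub_Un_le[rotated 2]) (use finV finD in auto)
    then show "8 * card D < card ({v\<in>V2. \<exists>s\<in>D. adj0 s v} - D)" using e AB'(5) D(2) s2b by linarith
  qed
  obtain D where D: "D \<subseteq> V2" "card D < 2*m"
    and Dexp: "\<forall>S \<subseteq> V2 - D. card S < 2*m \<longrightarrow> 8 * card S \<le> card ({v\<in>V2. \<exists>s\<in>S. adj0 s v} - D)"
    using cleaning[OF finV(2), of "2*m" 8 adj0] big mM(1) by auto
  define V' where "V' = V2 - D"
  have finV': "finite V'" using finV unfolding V'_def by auto
  have V'exp: "\<forall>S \<subseteq> V'. card S < 2*m \<longrightarrow> 8 * card S \<le> card {v\<in>V'. \<exists>s\<in>S. adj0 s v}"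
  proof (intro allI impI)
    fix S assume "S \<subseteq> V'" "card S < 2*m"
    moreover have "{v\<in>V'. \<exists>s\<in>S. adj0 s v} = {v\<in>V2. \<exists>s\<in>S. adj0 s v} - D" unfolding V'_def by auto
    ultimately show "8 * card S \<le> card {v\<in>V'. \<exists>s\<in>S. adj0 s v}" using Dexp unfolding V'_def by auto
  qed
  define good where "good r \<longleftrightarrow> 4 \<le> card {v\<in>V'. adj0 r v}" for r
  have badA: "card {r\<in>A. \<not> good r} < m" if AB: "(A = X1 \<and> B = Y2) \<or> (A = Y1 \<and> B = X2)" for A B
  proof (rule ccontr)
    assume "\<not> card {r\<in>A. \<not> good r} < m"
    then obtain A' where A': "A' \<subseteq> {r\<in>A. \<not> good r}" "card A' = m"
      using obtain_subset_with_card_n by (metis not_less)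
    have "finite A" using AB finX1 by auto
    then have finA': "finite A'" using A'(1) finite_subset[of A' A] by auto
    have finB: "finite (B - D)" using AB finX1 by auto
    have side: "(A' \<subseteq> X \<and> B - D \<subseteq> Y) \<or> (A' \<subseteq> Y \<and> B - D \<subseteq> X)" using AB A'(1) sub by auto
    have e: "card (B - D) < card {w\<in>B - D. \<exists>u\<in>A'. adj0 u w} + M"
      using expand[OF side finA' finB] A'(2) by simp
    have "{w\<in>B - D. \<exists>u\<in>A'. adj0 u w} \<subseteq> (\<Union>u\<in>A'. {v\<in>V'. adj0 u v})"
      using AB unfolding V'_def V2_def by auto
    then have "card {w\<in>B - D. \<exists>u\<in>A'. adj0 u w} \<le> card (\<Union>u\<in>A'. {v\<in>V'. adj0 u v})"
      by (intro card_mono) (use finV' in \<open>auto intro: finite_subset[of _ V']\<close>)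
    also have "\<dots> \<le> (\<Sum>u\<in>A'. card {v\<in>V'. adj0 u v})" by (rule card_UN_le[OF finA'])
    also have "\<dots> \<le> of_nat (card A') * 3"
    proof (rule sum_bounded_above)
      fix u assume "u \<in> A'"
      then have "\<not> good u" using A'(1) by auto
      then show "card {v\<in>V'. adj0 u v} \<le> 3" unfolding good_def by simp
    qed
    finally have c1: "card {w\<in>B - D. \<exists>u\<in>A'. adj0 u w} \<le> 3 * m" using A'(2) by simp
    have "card B - card D \<le> card (B - D)" by (rule diff_card_le_card_Diff) (use D finV in \<open>auto intro: finite_subset\<close>)
    moreover have "card B = s2" using AB cX2 cY2 by auto
    ultimately show False using e c1 D(2) s2b by linarith
  qed
  define Bad where "Bad = {r\<in>V1. \<not> good r}"
  have cBad: "card Bad < 2*m"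
  proof -
    have "Bad \<subseteq> {r\<in>X1. \<not> good r} \<union> {r\<in>Y1. \<not> good r}" unfolding Bad_def V1_def by auto
    then have "card Bad \<le> card {r\<in>X1. \<not> good r} + card {r\<in>Y1. \<not> good r}"
      by (rule card_sub_Un_le[rotated 2]) (use finX1 in auto)
    moreover have "card {r\<in>X1. \<not> good r} < m" by (rule badA) auto
    moreover have "card {r\<in>Y1. \<not> good r} < m" by (rule badA) auto
    ultimately show ?thesis by linarith
  qed
  have finBad: "finite Bad" unfolding Bad_def using finV by auto
  obtain S P T where dI: "dfs_inv adj0 V1 S P T" and cST: "card S = card T" using dfs[OF finV(1)] by blast
  have dI': "S \<union> set P \<union> T = V1" "S \<inter> set P = {}" "S \<inter> T = {}" "set P \<inter> T = {}"
     "distinct P" "successively adj0 P" "\<forall>s\<in>S. \<forall>t\<in>T. \<not> adj0 s t"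
    using dI unfolding dfs_inv_def by blast+
  have noedge: "card (S \<inter> A) < M \<or> card (T \<inter> B) < M" if AB: "(A = X1 \<and> B = Y1) \<or> (A = Y1 \<and> B = X1)" for A B
  proof (rule ccontr)
    assume "\<not> ?thesis"
    then have c: "M \<le> card (S \<inter> A)" "M \<le> card (T \<inter> B)" by auto
    have fin: "finite (S \<inter> A)" "finite (T \<inter> B)" using AB finX1 by auto
    have EE: "\<forall>u\<in>S \<inter> A. \<forall>w\<in>T \<inter> B. E u w" using AB sub unfolding E_def tripartite_edge_def by auto
    obtain u w where uw: "u \<in> S \<inter> A" "w \<in> T \<inter> B" "red {u,w}" using P[OF fin EE] c mM(2) by force
    have "adj0 u w" using uw AB sub unfolding adj0_def by auto
    then show False using dI'(7) uw by blast
  qed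
  have n1: "card (S \<inter> X1) < M \<or> card (T \<inter> Y1) < M" by (rule noedge) auto
  have n2: "card (S \<inter> Y1) < M \<or> card (T \<inter> X1) < M" by (rule noedge) auto
  have finST: "finite S" "finite T" using dI'(1) finV by (metis finite_Un)+
  have cpart: "card (A \<inter> S) + card (A \<inter> set P) + card (A \<inter> T) = card A" if "A \<subseteq> V1" "finite A" for A
  proof -
    have "A = (A \<inter> S) \<union> (A \<inter> set P) \<union> (A \<inter> T)" using that dI'(1) by auto
    moreover have "card ((A \<inter> S) \<union> (A \<inter> set P) \<union> (A \<inter> T)) = card (A \<inter> S) + card (A \<inter> set P) + card (A \<inter> T)"
      using dI'(2-4) that(2) by (subst card_Un_disjoint; auto)+
    ultimately show ?thesis by simp
  qed
  have cX1: "card (X1 \<inter> S) + card (X1 \<inter> set P) + card (X1 \<inter> T) = s1" using cpart[of X1] X1 finX1 unfolding V1_def by auto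
  have cY1: "card (Y1 \<inter> S) + card (Y1 \<inter> set P) + card (Y1 \<inter> T) = s1" using cpart[of Y1] Y1 finX1 unfolding V1_def by auto
  have c2: "card (C \<inter> X1) + card (C \<inter> Y1) = card C" if "C \<subseteq> V1" "finite C" for C
  proof -
    have "C = (C \<inter> X1) \<union> (C \<inter> Y1)" using that unfolding V1_def by auto
    moreover have "card ((C \<inter> X1) \<union> (C \<inter> Y1)) = card (C \<inter> X1) + card (C \<inter> Y1)"
      using XY1 that(2) by (subst card_Un_disjoint) auto
    ultimately show ?thesis by simp
  qed
  have cS: "card (S \<inter> X1) + card (S \<inter> Y1) = card S" using c2[of S] dI'(1) finST by auto
  have cT: "card (T \<inter> X1) + card (T \<inter> Y1) = card T" using c2[of T] dI'(1) finST by auto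
  have cP: "card (set P \<inter> X1) + card (set P \<inter> Y1) = length P"
    using c2[of "set P"] dI'(1,5) by (auto simp: distinct_card)
  have longP: "M + 4*m + 2 \<le> length P"
    using n1 n2 cX1 cY1 cS cT cP cST unfolding s1_def by (simp add: Int_commute) linarith?
  define q where "q = (if even n then n - 2*a - 2 else n - 2*a - 3)"
  have qM: "q \<le> M" using mM(3) unfolding q_def by auto
  have setP: "set P \<subseteq> V1" using dI'(1) by auto
  obtain i where i: "i + q < length P" "good (P ! i)" "good (P ! (i + q))"
  proof -
    define I where "I = {..<length P - q}"
    define B1 where "B1 = {j\<in>I. P ! j \<in> Bad}"
    define B2 where "B2 = {j\<in>I. P ! (j + q) \<in> Bad}"
    have cI: "card I = length P - q" unfolding I_def by simp
    have "card B1 \<le> card Bad"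
    proof (rule card_inj_on_le[of "\<lambda>j. P ! j"])
      show "inj_on (\<lambda>j. P ! j) B1" unfolding B1_def I_def inj_on_def using dI'(5)
        by (auto simp: nth_eq_iff_index_eq)
      show "(\<lambda>j. P ! j) ` B1 \<subseteq> Bad" unfolding B1_def by auto
    qed (rule finBad)
    moreover have "card B2 \<le> card Bad"
    proof (rule card_inj_on_le[of "\<lambda>j. P ! (j + q)"])
      show "inj_on (\<lambda>j. P ! (j + q)) B2" unfolding B2_def I_def inj_on_def using dI'(5)
        by (auto simp: nth_eq_iff_index_eq)
      show "(\<lambda>j. P ! (j + q)) ` B2 \<subseteq> Bad" unfolding B2_def by auto
    qed (rule finBad)
    moreover have "card (B1 \<union> B2) \<le> card B1 + card B2" by (rule card_Un_le)
    ultimately have "card (B1 \<union> B2) < card I" using cBad cI longP qM by linarith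
    then have "\<not> I \<subseteq> B1 \<union> B2" using card_mono[of "B1 \<union> B2" I] unfolding B1_def B2_def I_def by auto
    then obtain j where j: "j \<in> I" "j \<notin> B1" "j \<notin> B2" by auto
    have jq: "j + q < length P" using j(1) unfolding I_def by auto
    then have "P ! j \<in> V1" "P ! (j + q) \<in> V1" using setP by auto
    then have "good (P ! j)" "good (P ! (j + q))" using j unfolding B1_def B2_def Bad_def by auto
    then show ?thesis using that jq by blast
  qed
  define r1 where "r1 = P ! i"
  define r2 where "r2 = P ! (i + q)"
  have rV1: "r1 \<in> V1" "r2 \<in> V1" using i(1) setP unfolding r1_def r2_def by auto
  have rV': "r1 \<notin> V'" "r2 \<notin> V'" using rV1 V12 unfolding V'_def by auto
  define side where "side v \<longleftrightarrow> v \<in> X" for v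
  have alt: "side u \<noteq> side v" if "adj0 u v" for u v using that assms(9) unfolding adj0_def side_def by auto
  have a2m: "2^a \<le> 2*m" using a(3) .
  have g12: "4 \<le> card {v\<in>V'. adj0 r1 v}" "4 \<le> card {v\<in>V'. adj0 r2 v}"
    using i(2,3) unfolding good_def r1_def r2_def by auto
  have "\<exists>L1 L2. tree_inv adj0 V' side r1 r2 a L1 L2"
    by (rule tree_grow[where m=m]) (fact finV' rV'(1) rV'(2) V'exp g12(1) g12(2) a2m alt)+
  then obtain L1 L2 where TI: "tree_inv adj0 V' side r1 r2 a L1 L2" by blast
  have T01: "L1 0 = {r1}" using TI unfolding tree_inv_def by (elim conjE) assumption
  have T02: "L2 0 = {r2}" using TI unfolding tree_inv_def by (elim conjE) assumption
  have Tsz: "\<forall>i\<in>{1..a}. L1 i \<subseteq> V' \<and> card (L1 i) = 2^i \<and> L2 i \<subseteq> V' \<and> card (L2 i) = 2^i"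
    using TI unfolding tree_inv_def by (elim conjE) assumption
  have Tdj: "\<forall>i\<in>{1..a}. \<forall>j\<in>{1..a}. i \<noteq> j \<longrightarrow> L1 i \<inter> L1 j = {} \<and> L2 i \<inter> L2 j = {}"
    using TI unfolding tree_inv_def by (elim conjE) assumption
  have Tdj2: "\<forall>i\<in>{1..a}. \<forall>j\<in>{1..a}. L1 i \<inter> L2 j = {}"
    using TI unfolding tree_inv_def by (elim conjE) assumption
  have Tpar: "\<forall>i\<in>{1..a}. (\<forall>v\<in>L1 i. \<exists>u\<in>L1 (i-1). adj0 u v) \<and> (\<forall>v\<in>L2 i. \<exists>u\<in>L2 (i-1). adj0 u v)"
    using TI unfolding tree_inv_def by (elim conjE) assumption
  have Tsd: "\<forall>i\<le>a. (\<forall>v\<in>L1 i. side v = (side r1 = even i)) \<and> (\<forall>v\<in>L2 i. side v = (side r2 = even i))"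
    using TI unfolding tree_inv_def by (elim conjE) assumption
  have Tcd: "card (\<Union>i\<in>{1..a}. L1 i \<union> L2 i) + 4 \<le> 2^(a+2)"
    using TI unfolding tree_inv_def by (elim conjE) assumption
  define Used where "Used = (\<Union>i\<in>{1..a}. L1 i \<union> L2 i)"
  have UsedV: "Used \<subseteq> V'" using Tsz unfolding Used_def by auto
  have finUsed: "finite Used" using UsedV finV' finite_subset by blast
  have cUsed: "card Used \<le> 8*m"
  proof -
    have "(2::nat)^(a+2) = 4 * 2^a" by simp
    then show ?thesis using Tcd a(3) unfolding Used_def by linarith
  qed
  have V'XY: "V' \<subseteq> X2 \<union> Y2" unfolding V'_def V2_def by auto
  have a1: "a \<in> {1..a}" using a(1) by auto
  define U where "U = L1 a"
  have U: "U \<subseteq> V'" "card U = 2^a" using Tsz a1 unfolding U_def by auto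
  have U3: "finite U" using U(1) finV' finite_subset by blast
  have L2a: "L2 a \<subseteq> V'" "card (L2 a) = 2^a" using Tsz a1 by auto
  have L2a3: "finite (L2 a)" using L2a(1) finV' finite_subset by blast
  define \<sigma>2 where "\<sigma>2 = (side r2 = even a)"
  have sdL2a: "\<forall>v\<in>L2 a. side v = \<sigma>2" using Tsd unfolding \<sigma>2_def by auto
  define Opp where "Opp = (if \<sigma>2 then Y2 else X2)"
  have L2side: "(L2 a \<subseteq> X \<and> Opp \<subseteq> Y) \<or> (L2 a \<subseteq> Y \<and> Opp \<subseteq> X)"
  proof (cases \<sigma>2)
    case True
    then have "L2 a \<subseteq> X" using sdL2a unfolding side_def by auto
    then show ?thesis using True sub unfolding Opp_def by auto
  next
    case False
    then have "\<forall>v\<in>L2 a. v \<notin> X" using sdL2a unfolding side_def by auto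
    then have "L2 a \<subseteq> Y" using L2a(1) V'XY sub by blast
    then show ?thesis using False sub unfolding Opp_def by auto
  qed
  have cOpp: "card Opp = s2" "finite Opp" "Opp \<subseteq> V2" using cX2 cY2 finX1 unfolding Opp_def V2_def by auto
  define W where "W = {w\<in>Opp. \<exists>u\<in>L2 a. adj0 u w} - D - Used"
  have cW: "M \<le> card W"
  proof -
    have e: "card Opp < card {w\<in>Opp. \<exists>u\<in>L2 a. adj0 u w} + M"
      using expand[OF L2side L2a3 cOpp(2)] L2a(2) a(2) by simp
    have "{w\<in>Opp. \<exists>u\<in>L2 a. adj0 u w} \<subseteq> W \<union> (D \<union> Used)" unfolding W_def by auto
    then have "card {w\<in>Opp. \<exists>u\<in>L2 a. adj0 u w} \<le> card W + card (D \<union> Used)"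
      by (rule card_sub_Un_le[rotated 2]) (use cOpp finUsed D finV in \<open>auto simp: W_def intro: finite_subset\<close>)
    moreover have "card (D \<union> Used) \<le> card D + card Used" by (rule card_Un_le)
    ultimately show ?thesis using e cOpp(1) D(2) cUsed s2b by linarith
  qed
  have W: "W \<subseteq> V'" "W \<inter> Used = {}" "finite W" "\<forall>w\<in>W. side w = (\<not> \<sigma>2)" "\<forall>w\<in>W. \<exists>u\<in>L2 a. adj0 u w"
    using cOpp(2,3) assms(9) sub unfolding W_def V'_def Opp_def side_def by (auto split: if_splits)
  have parP: "side r2 = (side r1 = even q)"
    unfolding r1_def r2_def by (rule list_parity[OF dI'(6)]) (use alt i(1) in auto)
  have sdU: "\<forall>v\<in>U. side v = (side r1 = even a)" using Tsd unfolding U_def by auto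
  have XYV': "v \<in> X \<or> v \<in> Y" if "v \<in> V'" for v using that V'XY sub by auto
  define R where "R = (\<lambda>x y. E x y \<and> red {x,y})"
  have Rsym: "R x y \<Longrightarrow> R y x" for x y unfolding R_def using Esym by (auto simp: insert_commute)
  have adjR: "adj0 x y \<Longrightarrow> R x y" for x y using adjE unfolding R_def by auto
  have EUW: "E u w" if "u \<in> V'" "w \<in> V'" "side u \<noteq> side w" for u w
    using that XYV'[OF that(1)] XYV'[OF that(2)] unfolding side_def E_def tripartite_edge_def by auto
  have EZ: "E v z" if "v \<in> V'" "z \<in> Z" for v z
    using that XYV'[OF that(1)] unfolding E_def tripartite_edge_def by auto
  have close: "\<exists>u\<in>U. \<exists>w\<in>W. \<exists>zs. length zs + 2*a + 2 + q = n \<and> length zs \<le> 1 \<and> set zs \<subseteq> Z \<and> successively R ([w] @ zs @ [u])"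
  proof (cases "even n")
    case True
    then have qn: "q + 2*a + 2 = n" "even q" using a(4) unfolding q_def by auto
    then have "side r2 = side r1" using parP by simp
    then have sUW: "\<forall>u\<in>U. \<forall>w\<in>W. side u \<noteq> side w" using sdU W(4) unfolding \<sigma>2_def by auto
    have "\<forall>u\<in>U. \<forall>w\<in>W. E u w" using sUW U(1) W(1) EUW by blast
    then obtain u w where uw: "u \<in> U" "w \<in> W" "red {u,w}" using P[OF U3 W(3)] U(2) a(2) cW by force
    then have "R w u" using Esym \<open>\<forall>u\<in>U. \<forall>w\<in>W. E u w\<close> unfolding R_def by (auto simp: insert_commute)
    then show ?thesis using uw qn by (intro bexI[of _ u] bexI[of _ w] exI[of _ "[]"]) auto
  next
    case False
    then have qn: "q + 2*a + 3 = n" using a(4) unfolding q_def by presburger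
    have EUz: "\<forall>u\<in>U. \<forall>z\<in>Z. E u z" using EZ U(1) by blast
    have EWz: "\<forall>w\<in>W. \<forall>z\<in>Z. E w z" using EZ W(1) by blast
    have c1: "card {z\<in>Z. \<forall>u\<in>U. \<not> red {u,z}} < M" using Pnon[OF U3 assms(8) EUz] U(2) a(2) by simp
    have c2: "card {z\<in>Z. \<forall>w\<in>W. \<not> red {w,z}} < m" using Pnon2[OF W(3) assms(8) EWz cW] .
    have cZ: "card ({z\<in>Z. \<forall>u\<in>U. \<not> red {u,z}} \<union> {z\<in>Z. \<forall>w\<in>W. \<not> red {w,z}}) < card Z"
      using card_Un_le[of "{z\<in>Z. \<forall>u\<in>U. \<not> red {u,z}}" "{z\<in>Z. \<forall>w\<in>W. \<not> red {w,z}}"] c1 c2 assms(14) mM(4) by linarith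
    have "\<not> Z \<subseteq> {z\<in>Z. \<forall>u\<in>U. \<not> red {u,z}} \<union> {z\<in>Z. \<forall>w\<in>W. \<not> red {w,z}}"
    proof
      assume h: "Z \<subseteq> {z\<in>Z. \<forall>u\<in>U. \<not> red {u,z}} \<union> {z\<in>Z. \<forall>w\<in>W. \<not> red {w,z}}"
      have "card Z \<le> card ({z\<in>Z. \<forall>u\<in>U. \<not> red {u,z}} \<union> {z\<in>Z. \<forall>w\<in>W. \<not> red {w,z}})"
        by (rule card_mono) (use h assms(8) in auto)
      then show False using cZ by simp
    qed
    then obtain z u w where zuw: "z \<in> Z" "u \<in> U" "w \<in> W" "red {u,z}" "red {w,z}" by blast
    have "R w z" "R z u" using zuw EWz EUz Esym unfolding R_def by (auto simp: insert_commute)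
    then show ?thesis using zuw qn by (intro bexI[of _ u] bexI[of _ w] exI[of _ "[z]"]) auto
  qed
  obtain u w zs where uw: "u \<in> U" "w \<in> W" "length zs + 2*a + 2 + q = n" "length zs \<le> 1" "set zs \<subseteq> Z"
    "successively R ([w] @ zs @ [u])" using close by blast
  obtain w' where w': "w' \<in> L2 a" "adj0 w' w" using W(5) uw(2) by blast
  have par1: "\<forall>j\<in>{1..a}. \<forall>v\<in>L1 j. \<exists>x\<in>L1 (j-1). adj0 x v" using Tpar by blast
  have par2: "\<forall>j\<in>{1..a}. \<forall>v\<in>L2 j. \<exists>x\<in>L2 (j-1). adj0 x v" using Tpar by blast
  obtain p1 where p1: "p1 0 = r1" "p1 a = u" "\<forall>j\<le>a. p1 j \<in> L1 j" "\<forall>j<a. adj0 (p1 j) (p1 (Suc j))"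
    using tree_path[OF par1 T01, of u] uw(1) unfolding U_def by blast
  obtain p2 where p2: "p2 0 = r2" "p2 a = w'" "\<forall>j\<le>a. p2 j \<in> L2 j" "\<forall>j<a. adj0 (p2 j) (p2 (Suc j))"
    using tree_path[OF par2 T02, of w'] w'(1) by blast
  have LU: "L1 j \<subseteq> Used" "L2 j \<subseteq> Used" if "j \<in> {1..a}" for j using that unfolding Used_def by auto
  have V'Z: "V' \<inter> Z = {}" using V'XY sub assms(10,11) by blast
  have V1Z: "V1 \<inter> Z = {}" using sub assms(10,11) unfolding V1_def by auto
  have V1V': "V1 \<inter> V' = {}" using V12 unfolding V'_def by auto
  define Qs where "Qs = map (\<lambda>j. P ! j) [i..<Suc (i+q)]"
  define T2 where "T2 = map p2 [1..<Suc a]"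
  define B where "B = [w] @ zs @ [u]"
  define T1 where "T1 = rev (map p1 [1..<a])"
  define cs where "cs = Qs @ T2 @ B @ T1"
  have len: "length cs = n" unfolding cs_def Qs_def T2_def B_def T1_def using uw(3) a(1) by simp
  have sQ: "successively R Qs" unfolding Qs_def
  proof (rule succ_map_upt)
    fix j assume "i \<le> j" "Suc j < Suc (i + q)"
    then have "Suc j < length P" using i(1) by simp
    then show "R (P ! j) (P ! Suc j)" using successively_nth[OF dI'(6)] adjR by blast
  qed
  have sT2: "successively R T2" unfolding T2_def by (rule succ_map_upt) (use p2(4) adjR in auto)
  have sT1: "successively R T1" unfolding T1_def successively_rev
    by (rule succ_map_upt) (use p1(4) adjR Rsym in auto)
  have sB: "successively R B" using uw(6) unfolding B_def .
  have lastB: "last B = u" "B \<noteq> []" "hd B = w" unfolding B_def by auto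
  have sBT1: "successively R (B @ T1)"
  proof (rule succ_app[OF sB sT1])
    assume "T1 \<noteq> []"
    then have a2: "2 \<le> a" unfolding T1_def by auto
    then have "hd T1 = p1 (a - 1)" unfolding T1_def by (simp add: hd_rev last_map)
    moreover have "adj0 (p1 (a-1)) (p1 a)" using p1(4) a2 by (metis Suc_diff_1 diff_less less_le_trans zero_less_one zero_less_numeral)
    ultimately show "R (last B) (hd T1)" using lastB p1(2) adjR Rsym by auto
  qed
  have sT2B: "successively R (T2 @ B @ T1)"
  proof (rule succ_app[OF sT2 sBT1])
    have "last T2 = p2 a" unfolding T2_def using a(1) by (simp add: last_map)
    then show "R (last T2) (hd (B @ T1))" using lastB w' p2(2) adjR by auto
  qed
  have scs: "successively R cs" unfolding cs_def
  proof (rule succ_app[OF sQ sT2B])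
    have "last Qs = r2" unfolding Qs_def r2_def by (simp add: last_map)
    moreover have "hd (T2 @ B @ T1) = p2 1"
    proof -
      have "[1..<Suc a] = 1 # [Suc 1..<Suc a]" using a(1) by (simp add: upt_conv_Cons)
      then show ?thesis unfolding T2_def by simp
    qed
    moreover have "adj0 (p2 0) (p2 1)" using p2(4) a(1) by auto
    ultimately show "R (last Qs) (hd (T2 @ B @ T1))" using p2(1) adjR by auto
  qed
  have hdcs: "hd cs = r1"
  proof -
    have "[i..<Suc (i+q)] = i # [Suc i..<Suc (i+q)]" by (simp add: upt_conv_Cons)
    then show ?thesis unfolding cs_def Qs_def r1_def by simp
  qed
  have lastcs: "last cs = p1 1"
  proof (cases "T1 = []")
    case True
    then have "a = 1" using a(1) unfolding T1_def by auto
    then show ?thesis using True lastB p1(2) unfolding cs_def by simp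
  next
    case False
    then have "last T1 = p1 1" unfolding T1_def by (simp add: last_rev hd_map)
    then show ?thesis using False unfolding cs_def by simp
  qed
  have Rlast: "R (last cs) (hd cs)" using lastcs hdcs p1(1) p1(4) a(1) adjR Rsym by auto
  have setQ: "set Qs \<subseteq> V1" unfolding Qs_def using setP i(1) by auto
  have dQ: "distinct Qs" unfolding Qs_def distinct_map inj_on_def using dI'(5) i(1)
    by (auto simp: nth_eq_iff_index_eq)
  have p2L: "p2 j \<in> L2 j" "p2 j \<in> Used" if "j \<in> {1..a}" for j using p2(3) LU(2)[OF that] that by auto
  have p1L: "p1 j \<in> L1 j" "p1 j \<in> Used" if "j \<in> {1..a}" for j using p1(3) LU(1)[OF that] that by auto
  have eT2: "set T2 = p2 ` {1..a}" unfolding T2_def by auto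
  have eT1: "set T1 = p1 ` {1..<a}" unfolding T1_def by auto
  have setT2: "set T2 \<subseteq> Used" unfolding eT2 using p2L(2) by blast
  have setT1: "set T1 \<subseteq> Used" unfolding eT1 using p1L(2) by auto
  have dT2: "distinct T2" unfolding T2_def distinct_map
  proof
    show "inj_on p2 (set [1..<Suc a])"
    proof (rule inj_onI)
      fix j k assume jk: "j \<in> set [1..<Suc a]" "k \<in> set [1..<Suc a]" "p2 j = p2 k"
      show "j = k"
      proof (rule ccontr)
        assume jk0: "j \<noteq> k"
        have jk': "j \<in> {1..a}" "k \<in> {1..a}" using jk(1,2) by auto
        have m1: "p2 j \<in> L2 j" "p2 k \<in> L2 k" using p2(3) jk'(1,2) by auto
        have "L2 j \<inter> L2 k = {}" using bspec[OF bspec[OF Tdj jk'(1)] jk'(2)] jk0 by simp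
        then show False using m1 jk(3) by auto
      qed
    qed
  qed simp
  have dT1: "distinct T1" unfolding T1_def distinct_rev distinct_map
  proof
    show "inj_on p1 (set [1..<a])"
    proof (rule inj_onI)
      fix j k assume jk: "j \<in> set [1..<a]" "k \<in> set [1..<a]" "p1 j = p1 k"
      show "j = k"
      proof (rule ccontr)
        assume jk0: "j \<noteq> k"
        have jk': "j \<in> {1..a}" "k \<in> {1..a}" using jk(1,2) by auto
        have m1: "p1 j \<in> L1 j" "p1 k \<in> L1 k" using p1(3) jk'(1,2) by auto
        have "L1 j \<inter> L1 k = {}" using bspec[OF bspec[OF Tdj jk'(1)] jk'(2)] jk0 by simp
        then show False using m1 jk(3) by auto
      qed
    qed
  qed simp
  have uL1: "u \<in> L1 a" using uw(1) unfolding U_def .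
  have uL: "u \<in> L1 a" "u \<in> Used" using uL1 LU(1)[OF a1] by auto
  have wV: "w \<in> V'" "w \<notin> Used" using uw(2) W(1,2) by auto
  have uV: "u \<in> V'" using uL UsedV by auto
  have dB: "distinct B" unfolding B_def using uw(4,5) uL wV V'Z uV
    by (cases zs) auto
  have setB: "set B \<subseteq> V' \<union> Z" unfolding B_def using uw(5) uV wV by auto
  have eB: "set B = {w, u} \<union> set zs" unfolding B_def by auto
  have UsedZ: "Used \<inter> Z = {}" using UsedV V'Z by blast
  have T2B: "set T2 \<inter> set B = {}"
  proof -
    have "x \<notin> set B" if xT: "x \<in> set T2" for x
    proof -
      obtain j where j: "j \<in> {1..a}" "x = p2 j" using xT eT2 by auto
      have "L1 a \<inter> L2 j = {}" using bspec[OF bspec[OF Tdj2 a1] j(1)] .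
      then have "x \<noteq> u" using p2L(1)[OF j(1)] uL(1) j(2) by blast
      moreover have "x \<noteq> w" using p2L(2)[OF j(1)] wV(2) j(2) by blast
      moreover have "x \<notin> set zs" using p2L(2)[OF j(1)] j(2) uw(5) UsedZ by blast
      ultimately show ?thesis unfolding eB by blast
    qed
    then show ?thesis by blast
  qed
  have T2T1: "set T2 \<inter> set T1 = {}"
  proof -
    have "x \<notin> set T1" if xT: "x \<in> set T2" for x
    proof
      assume "x \<in> set T1"
      then obtain k where k: "k \<in> {1..<a}" "x = p1 k" using eT1 by auto
      obtain j where j: "j \<in> {1..a}" "x = p2 j" using xT eT2 by auto
      have k': "k \<in> {1..a}" using k(1) by auto
      have "L1 k \<inter> L2 j = {}" using bspec[OF bspec[OF Tdj2 k'] j(1)] .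
      moreover have "p1 k = p2 j" using j(2) k(2) by simp
      then have "p1 k \<in> L1 k \<inter> L2 j" using p1L(1)[OF k'] p2L(1)[OF j(1)] by simp
      ultimately show False by simp
    qed
    then show ?thesis by blast
  qed
  have BT1: "set B \<inter> set T1 = {}"
  proof -
    have "x \<notin> set B" if xT: "x \<in> set T1" for x
    proof -
      obtain k where k: "k \<in> {1..<a}" "x = p1 k" using xT eT1 by auto
      have k': "k \<in> {1..a}" "k \<noteq> a" using k(1) by auto
      have "L1 k \<inter> L1 a = {}" using bspec[OF bspec[OF Tdj k'(1)] a1] k'(2) by simp
      then have "x \<noteq> u" using p1L(1)[OF k'(1)] uL(1) k(2) by blast
      moreover have "x \<noteq> w" using p1L(2)[OF k'(1)] wV(2) k(2) by blast
      moreover have "x \<notin> set zs" using p1L(2)[OF k'(1)] k(2) uw(5) UsedZ by blast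
      ultimately show ?thesis unfolding eB by blast
    qed
    then show ?thesis by blast
  qed
  have "set T2 \<union> set B \<union> set T1 \<subseteq> V' \<union> Z" using setT2 setT1 setB UsedV by blast
  then have QR: "set Qs \<inter> (set T2 \<union> set B \<union> set T1) = {}" using setQ V1V' V1Z by blast
  have dcs: "distinct cs" unfolding cs_def distinct_append
    using dQ dT2 dB dT1 QR T2B T2T1 BT1 by (simp add: Int_Un_distrib Int_Un_distrib2)
  show "has_red_cycle (tripartite_edge X Y Z) red n"
    by (rule cycle_from_list[OF dcs len assms(1)]) (use scs Rlast in \<open>auto simp: R_def E_def\<close>)





qed


end
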